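(* Let $G$ be a group acting without inversions on a tree $T$ and let $A\subseteq B$ be subgroups of $G$, both containing hyperbolic elements. Let $v$ be a vertex of $T_{A}$ (so also of $T_B$), and consider the graph map $\pi_{B}:T_{A}/A \to T_{B}/B$, $[x]_{A}\mapsto[x]_{B}$. \begin{enumerate} \item If the stars are finite, then $|Star([v]_{A})|\leq |G_{v}\cap B|\cdot |Star([v]_{B})|$. \item If moreover $v$ is $B$-degenerate and $B_{v}$ stabilizes each edge of $T_B$ with initial vertex $v$, then the restriction $\pi_{B}: Star([v]_{A}) \to Star([v]_{B})$ is injective. \end{enumerate}
   Context: $T_A\subseteq T_B$ denote the unique minimal invariant subtrees of $A$ and $B$. $Star([v]_A)$ is the set of edges of $T_A/A$ with initial vertex $[v]_A$, and $Star([v]_B)$ the set of edges of $T_B/B$ with initial vertex $[v]_B$. A vertex $v$ is $B$-degenerate if $B_v=B_e$ for some edge $e$ of $T_B$ with initial vertex $v$. *)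

theory Defs
  imports "HOL-Algebra.Group_Action" "HOL-Library.Extended_Nat"
begin

text \<open>A tree is modelled as a simplicial graph: vertex set V and a symmetric,
irreflexive adjacency relation adj; the (oriented) edges are the ordered pairs
(x,y) with adj x y, the origin (initial vertex) of (x,y) is x.  A tree is a
nonempty connected graph without circuits, i.e. any two vertices are joined by
exactly one reduced (non-backtracking) path.\<close>

definition reduced_path :: "('v \<Rightarrow> 'v \<Rightarrow> bool) \<Rightarrow> 'v list \<Rightarrow> 'v \<Rightarrow> 'v \<Rightarrow> bool" where
  "reduced_path adj xs x y \<longleftrightarrow>
     xs \<noteq> [] \<and> hd xs = x \<and> last xs = y \<and>
     (\<forall>i. i + 1 < length xs \<longrightarrow> adj (xs ! i) (xs ! (i + 1))) \<and>
     (\<forall>i. i + 2 < length xs \<longrightarrow> xs ! i \<noteq> xs ! (i + 2))"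

definition is_tree :: "'v set \<Rightarrow> ('v \<Rightarrow> 'v \<Rightarrow> bool) \<Rightarrow> bool" where
  "is_tree V adj \<longleftrightarrow>
     V \<noteq> {} \<and>
     (\<forall>x y. adj x y \<longrightarrow> x \<in> V \<and> y \<in> V) \<and>
     (\<forall>x y. adj x y \<longrightarrow> adj y x) \<and>
     (\<forall>x. \<not> adj x x) \<and>
     (\<forall>x\<in>V. \<forall>y\<in>V. \<exists>!xs. reduced_path adj xs x y)"

definition tree_action :: "('g, 'm) monoid_scheme \<Rightarrow> 'v set \<Rightarrow> ('v \<Rightarrow> 'v \<Rightarrow> bool) \<Rightarrow> ('g \<Rightarrow> 'v \<Rightarrow> 'v) \<Rightarrow> bool" where
  "tree_action G V adj \<phi> \<longleftrightarrow>
     group_action G V \<phi> \<and> is_tree V adj \<and>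
     (\<forall>g\<in>carrier G. \<forall>x\<in>V. \<forall>y\<in>V. adj (\<phi> g x) (\<phi> g y) \<longleftrightarrow> adj x y)"

definition without_inversions :: "('g, 'm) monoid_scheme \<Rightarrow> ('v \<Rightarrow> 'v \<Rightarrow> bool) \<Rightarrow> ('g \<Rightarrow> 'v \<Rightarrow> 'v) \<Rightarrow> bool" where
  "without_inversions G adj \<phi> \<longleftrightarrow>
     (\<forall>g\<in>carrier G. \<forall>x y. adj x y \<longrightarrow> \<not> (\<phi> g x = y \<and> \<phi> g y = x))"

text \<open>Elliptic = fixes a point of T (for actions without inversions: fixes a vertex);
hyperbolic = not elliptic.\<close>
definition hyperbolic :: "('g, 'm) monoid_scheme \<Rightarrow> 'v set \<Rightarrow> ('g \<Rightarrow> 'v \<Rightarrow> 'v) \<Rightarrow> 'g \<Rightarrow> bool" where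
  "hyperbolic G V \<phi> g \<longleftrightarrow> g \<in> carrier G \<and> \<not> (\<exists>x\<in>V. \<phi> g x = x)"

text \<open>Subtree: nonempty set of vertices, closed under reduced paths (hence the
induced subgraph is a tree).\<close>
definition is_subtree :: "'v set \<Rightarrow> ('v \<Rightarrow> 'v \<Rightarrow> bool) \<Rightarrow> 'v set \<Rightarrow> bool" where
  "is_subtree V adj S \<longleftrightarrow> S \<noteq> {} \<and> S \<subseteq> V \<and>
     (\<forall>x\<in>S. \<forall>y\<in>S. \<forall>xs. reduced_path adj xs x y \<longrightarrow> set xs \<subseteq> S)"

definition invariant_set :: "'g set \<Rightarrow> ('g \<Rightarrow> 'v \<Rightarrow> 'v) \<Rightarrow> 'v set \<Rightarrow> bool" where
  "invariant_set A \<phi> S \<longleftrightarrow> (\<forall>a\<in>A. \<forall>x\<in>S. \<phi> a x \<in> S)"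

definition min_invariant_subtree ::
  "'v set \<Rightarrow> ('v \<Rightarrow> 'v \<Rightarrow> bool) \<Rightarrow> 'g set \<Rightarrow> ('g \<Rightarrow> 'v \<Rightarrow> 'v) \<Rightarrow> 'v set \<Rightarrow> bool" where
  "min_invariant_subtree V adj A \<phi> S \<longleftrightarrow>
     is_subtree V adj S \<and> invariant_set A \<phi> S \<and>
     (\<forall>S'. is_subtree V adj S' \<and> invariant_set A \<phi> S' \<and> S' \<subseteq> S \<longrightarrow> S' = S)"

text \<open>Vertex orbits [x]_A and edge orbits (edges of the quotient graph).\<close>
definition vorbit :: "'g set \<Rightarrow> ('g \<Rightarrow> 'v \<Rightarrow> 'v) \<Rightarrow> 'v \<Rightarrow> 'v set" where
  "vorbit A \<phi> x = {\<phi> a x | a. a \<in> A}"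

definition eorbit :: "'g set \<Rightarrow> ('g \<Rightarrow> 'v \<Rightarrow> 'v) \<Rightarrow> 'v \<times> 'v \<Rightarrow> ('v \<times> 'v) set" where
  "eorbit A \<phi> e = {(\<phi> a (fst e), \<phi> a (snd e)) | a. a \<in> A}"

text \<open>Star([v]_A): the edges of T_S/A (T_S the subtree with vertex set S) whose
initial vertex is [v]_A.\<close>
definition qstar :: "('v \<Rightarrow> 'v \<Rightarrow> bool) \<Rightarrow> 'g set \<Rightarrow> ('g \<Rightarrow> 'v \<Rightarrow> 'v) \<Rightarrow> 'v set \<Rightarrow> 'v \<Rightarrow> ('v \<times> 'v) set set" where
  "qstar adj A \<phi> S v =
     {eorbit A \<phi> (x, y) | x y. x \<in> S \<and> y \<in> S \<and> adj x y \<and> x \<in> vorbit A \<phi> v}"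

text \<open>The graph map pi_B on edges: an A-orbit of edges goes to the B-orbit
containing it (for A \<subseteq> B this is the B-saturation).\<close>
definition qmap_edge :: "'g set \<Rightarrow> ('g \<Rightarrow> 'v \<Rightarrow> 'v) \<Rightarrow> ('v \<times> 'v) set \<Rightarrow> ('v \<times> 'v) set" where
  "qmap_edge B \<phi> Eo = (\<Union>e\<in>Eo. eorbit B \<phi> e)"

definition vstab :: "'g set \<Rightarrow> ('g \<Rightarrow> 'v \<Rightarrow> 'v) \<Rightarrow> 'v \<Rightarrow> 'g set" where
  "vstab B \<phi> v = {b \<in> B. \<phi> b v = v}"

definition estab :: "'g set \<Rightarrow> ('g \<Rightarrow> 'v \<Rightarrow> 'v) \<Rightarrow> 'v \<times> 'v \<Rightarrow> 'g set" where
  "estab B \<phi> e = {b \<in> B. \<phi> b (fst e) = fst e \<and> \<phi> b (snd e) = snd e}"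

definition degenerate :: "('v \<Rightarrow> 'v \<Rightarrow> bool) \<Rightarrow> 'g set \<Rightarrow> ('g \<Rightarrow> 'v \<Rightarrow> 'v) \<Rightarrow> 'v set \<Rightarrow> 'v \<Rightarrow> bool" where
  "degenerate adj B \<phi> SB v \<longleftrightarrow>
     (\<exists>y\<in>SB. adj v y \<and> vstab B \<phi> v = estab B \<phi> (v, y))"

definition ecard :: "'a set \<Rightarrow> enat" where
  "ecard S = (if finite S then enat (card S) else \<infinity>)"

end

theory Submission
  imports Defs
begin

lemma rp_len: "reduced_path adj xs x y \<Longrightarrow> x \<noteq> y \<Longrightarrow> length xs \<ge> 2"
  unfolding reduced_path_def
  by (metis One_nat_def Suc_1 hd_conv_nth last_conv_nth le_less_linear length_0_conv less_2_cases diff_Suc_1)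

lemma rp_tl: assumes "reduced_path adj xs x y" "length xs \<ge> 2"
  shows "reduced_path adj (tl xs) (xs!1) y"
proof -
  obtain a ys where xs: "xs = a # ys" and ys: "ys \<noteq> []"
  proof
    show "xs = hd xs # tl xs" using assms(2) by (cases xs) auto
    show "tl xs \<noteq> []" using assms(2) by (cases xs) auto
  qed
  show ?thesis using assms(1) ys unfolding xs reduced_path_def
    by (auto simp: hd_conv_nth)
qed

lemma rp_butlast: assumes "reduced_path adj xs x y" "length xs \<ge> 2"
   shows "reduced_path adj (butlast xs) x (xs!(length xs - 2))"
proof -
  obtain a ys where xs: "xs = ys @ [a]" and ys: "ys \<noteq> []"
  proof
    show "xs = butlast xs @ [last xs]" using assms(2) by (cases xs rule: rev_cases) auto
    show "butlast xs \<noteq> []" using assms(2) by (cases xs rule: rev_cases) auto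
  qed
  have l: "length ys - 1 < length ys" using ys by simp
  show ?thesis using assms(1) ys unfolding xs reduced_path_def
    apply (auto simp: nth_append last_conv_nth)
    subgoal for i by (drule spec[where x=i], auto)
    subgoal for i by (drule spec[where x=i], drule spec[where x=i], auto)
    done
qed

lemma app_idx2:
  assumes "xs \<noteq> []" "ys \<noteq> []" "last xs = hd ys" "length xs - 1 \<le> k" "k < length xs + length ys - 1"
  shows "(xs @ tl ys) ! k = ys ! (k + 1 - length xs)"
proof (cases "k < length xs")
  case True
  then have "k = length xs - 1" using assms by simp
  then show ?thesis using assms by (simp add: nth_append last_conv_nth hd_conv_nth)
next
  case False
  then show ?thesis using assms by (simp add: nth_append nth_tl Suc_diff_le)
qed

lemma rp_append:
  assumes xs: "reduced_path adj xs x y" and ys: "reduced_path adj ys y z"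
    and l: "length xs \<ge> 2" "length ys \<ge> 2" and j: "xs!(length xs - 2) \<noteq> ys!1"
  shows "reduced_path adj (xs @ tl ys) x z"
proof -
  let ?n = "length xs" and ?m = "length ys"
  have ne: "xs \<noteq> []" "ys \<noteq> []" "tl ys \<noteq> []" using l by (auto simp: tl_Nil)
  have lh: "last xs = hd ys" using xs ys unfolding reduced_path_def by simp
  have L: "length (xs @ tl ys) = ?n + ?m - 1" using l by simp
  have i1: "(xs @ tl ys) ! k = xs ! k" if "k < ?n" for k using that by (simp add: nth_append)
  have i2: "(xs @ tl ys) ! k = ys ! (k + 1 - ?n)" if "?n - 1 \<le> k" "k < ?n + ?m - 1" for k
    using app_idx2[OF ne(1,2) lh that] .
  have A: "adj (xs ! i) (xs ! (i + 1))" if "i + 1 < ?n" for i using xs that unfolding reduced_path_def by blast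
  have B: "adj (ys ! i) (ys ! (i + 1))" if "i + 1 < ?m" for i using ys that unfolding reduced_path_def by blast
  have C: "xs ! i \<noteq> xs ! (i + 2)" if "i + 2 < ?n" for i using xs that unfolding reduced_path_def by blast
  have D: "ys ! i \<noteq> ys ! (i + 2)" if "i + 2 < ?m" for i using ys that unfolding reduced_path_def by blast
  show ?thesis unfolding reduced_path_def
  proof (intro conjI allI impI)
    show "xs @ tl ys \<noteq> []" using ne by simp
    show "hd (xs @ tl ys) = x" using xs ne unfolding reduced_path_def by simp
    show "last (xs @ tl ys) = z" using ys ne unfolding reduced_path_def by (simp add: last_tl)
  next
    fix i assume "i + 1 < length (xs @ tl ys)"
    then have h: "i + 1 < ?n + ?m - 1" using L by simp
    show "adj ((xs @ tl ys) ! i) ((xs @ tl ys) ! (i + 1))"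
    proof (cases "i + 1 < ?n")
      case True then show ?thesis using i1 A by simp
    next
      case False
      then have "(xs @ tl ys) ! i = ys ! (i + 1 - ?n)" "(xs @ tl ys) ! (i+1) = ys ! (i + 1 - ?n + 1)"
        using i2[of i] i2[of "i+1"] h False by (auto simp: Suc_diff_le)
      moreover have "i + 1 - ?n + 1 < ?m" using h False by simp
      ultimately show ?thesis using B by simp
    qed
  next
    fix i assume "i + 2 < length (xs @ tl ys)"
    then have h: "i + 2 < ?n + ?m - 1" using L by simp
    show "(xs @ tl ys) ! i \<noteq> (xs @ tl ys) ! (i + 2)"
    proof (cases "i + 2 < ?n")
      case True then show ?thesis using i1 C by simp
    next
      case F: False
      show ?thesis
      proof (cases "i + 2 = ?n")
        case True
        then have "(xs @ tl ys) ! i = xs ! (?n - 2)" "(xs @ tl ys) ! (i+2) = ys ! 1"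
          using i1[of i] i2[of "i+2"] h by (auto simp flip: True)
        then show ?thesis using j by simp
      next
        case False
        then have "(xs @ tl ys) ! i = ys ! (i + 1 - ?n)" "(xs @ tl ys) ! (i+2) = ys ! (i + 1 - ?n + 2)"
          using i2[of i] i2[of "i+2"] h F False by (auto simp: Suc_diff_le)
        moreover have "i + 1 - ?n + 2 < ?m" using h F False by simp
        ultimately show ?thesis using D by simp
      qed
    qed
  qed
qed

lemma rp_map:
  assumes "inj_on f V" "\<forall>a\<in>V. \<forall>b\<in>V. adj (f a) (f b) \<longleftrightarrow> adj a b" "set xs \<subseteq> V"
    "reduced_path adj xs x y"
  shows "reduced_path adj (map f xs) (f x) (f y)"
  using assms unfolding reduced_path_def
  apply (auto simp: hd_map last_map)
  subgoal for i
    using nth_mem[of i xs] nth_mem[of "Suc i" xs] by (simp add: subset_iff)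
  subgoal for i
    using nth_mem[of i xs] nth_mem[of "Suc (Suc i)" xs] inj_on_eq_iff[of f V]
    by (simp add: subset_iff)
  done

lemma rp_set:
  assumes "is_tree V adj" "reduced_path adj xs x y" "x \<in> V"
  shows "set xs \<subseteq> V"
proof
  fix w assume "w \<in> set xs"
  then obtain i where i: "i < length xs" "w = xs ! i" by (auto simp: in_set_conv_nth)
  show "w \<in> V"
  proof (cases "i + 1 < length xs")
    case True
    then have "adj (xs ! i) (xs ! (i+1))" using assms(2) unfolding reduced_path_def by blast
    then show ?thesis using assms(1) i unfolding is_tree_def by blast
  next
    case False
    show ?thesis
    proof (cases i)
      case 0 then show ?thesis using assms(2,3) i unfolding reduced_path_def by (metis hd_conv_nth)
    next
      case (Suc k)
      then have "adj (xs ! k) (xs ! (k+1))" using assms(2) i unfolding reduced_path_def by auto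
      then show ?thesis using assms(1) i Suc unfolding is_tree_def by auto
    qed
  qed
qed

lemma rp_unique:
  assumes "is_tree V adj" "reduced_path adj xs x y" "reduced_path adj ys x y" "x \<in> V" "y \<in> V"
  shows "xs = ys"
  using assms unfolding is_tree_def by blast

lemma rp_exists:
  assumes "is_tree V adj" "x \<in> V" "y \<in> V"
  obtains xs where "reduced_path adj xs x y"
  using assms unfolding is_tree_def by blast

lemma subtree_path:
  assumes "is_subtree V adj S" "x \<in> S" "y \<in> S" "reduced_path adj xs x y"
  shows "set xs \<subseteq> S"
  using assms unfolding is_subtree_def by blast

lemma minpair_exists:
  assumes "is_tree V adj" "S1 \<noteq> {}" "S2 \<noteq> {}" "S1 \<subseteq> V" "S2 \<subseteq> V"
  shows "\<exists>a\<in>S1. \<exists>b\<in>S2. \<exists>P. reduced_path adj P a b \<and>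
            (\<forall>x\<in>S1. \<forall>y\<in>S2. \<forall>Q. reduced_path adj Q x y \<longrightarrow> length P \<le> length Q)"
proof -
  let ?N = "{length Q | Q x y. x \<in> S1 \<and> y \<in> S2 \<and> reduced_path adj Q x y}"
  obtain x0 y0 where "x0 \<in> S1" "y0 \<in> S2" using assms by blast
  then obtain Q0 where "reduced_path adj Q0 x0 y0" using rp_exists[OF assms(1)] assms(4,5) by blast
  then have "length Q0 \<in> ?N" using \<open>x0 \<in> S1\<close> \<open>y0 \<in> S2\<close> by blast
  then have "(LEAST n. n \<in> ?N) \<in> ?N" by (rule LeastI)
  moreover define n where "n = (LEAST n. n \<in> ?N)"
  ultimately have "n \<in> ?N" by simp
  then obtain P a b where P: "a \<in> S1" "b \<in> S2" "reduced_path adj P a b" "length P = n"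
    by blast
  have "length P \<le> length Q" if "x \<in> S1" "y \<in> S2" "reduced_path adj Q x y" for x y Q
  proof -
    have "length Q \<in> ?N" using that by blast
    then show ?thesis unfolding P(4) n_def by (rule Least_le)
  qed
  then show ?thesis using P by blast
qed

lemma minpair_unique:
  assumes tree: "is_tree V adj" and S1: "is_subtree V adj S1" and S2: "is_subtree V adj S2"
    and disj: "S1 \<inter> S2 = {}"
    and ab: "a \<in> S1" "a' \<in> S1" "b \<in> S2" "b' \<in> S2"
    and P: "reduced_path adj P a b" and P': "reduced_path adj P' a' b'"
    and lenP: "length P' = length P"
    and min: "\<forall>x\<in>S1. \<forall>y\<in>S2. \<forall>Q. reduced_path adj Q x y \<longrightarrow> length P \<le> length Q"
  shows "a' = a"
proof (rule ccontr)
  assume ne: "a' \<noteq> a"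
  have sub: "S1 \<subseteq> V" "S2 \<subseteq> V" using S1 S2 unfolding is_subtree_def by auto
  have "a \<noteq> b" using disj ab by blast
  then have lP: "length P \<ge> 2" using rp_len[OF P] by simp
  have P1: "P ! 1 \<notin> S1"
  proof
    assume "P ! 1 \<in> S1"
    then have "length P \<le> length (tl P)" using min rp_tl[OF P lP] ab by blast
    then show False using lP by simp
  qed
  have Pn: "P ! (length P - 2) \<notin> S2"
  proof
    assume "P ! (length P - 2) \<in> S2"
    then have "length P \<le> length (butlast P)" using min rp_butlast[OF P lP] ab by blast
    then show False using lP by simp
  qed
  obtain Q where Q: "reduced_path adj Q a' a" using rp_exists[OF tree] ab sub by blast
  have QS: "set Q \<subseteq> S1" using subtree_path[OF S1 ab(2) ab(1) Q] .
  have lQ: "length Q \<ge> 2" using rp_len[OF Q ne] .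
  have "Q ! (length Q - 2) \<in> S1" using QS lQ by (simp add: subset_iff)
  then have j1: "Q ! (length Q - 2) \<noteq> P ! 1" using P1 by auto
  have QP: "reduced_path adj (Q @ tl P) a' b" using rp_append[OF Q P lQ lP j1] .
  have lQP: "length (Q @ tl P) > length P" using lQ lP by simp
  show False
  proof (cases "b' = b")
    case True
    have aV: "a' \<in> V" "b \<in> V" using ab sub by auto
    have "Q @ tl P = P'" using rp_unique[OF tree QP _ aV] P' True by simp
    then show False using lQP lenP by simp
  next
    case False
    obtain R where R: "reduced_path adj R b b'" using rp_exists[OF tree] ab sub by blast
    have RS: "set R \<subseteq> S2" using subtree_path[OF S2 ab(3) ab(4) R] .
    have lR: "length R \<ge> 2" using rp_len[OF R] False by auto
    have "R ! 1 \<in> S2" using RS lR by (simp add: subset_iff)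
    have lh: "last Q = hd P" using Q P unfolding reduced_path_def by simp
    have Qne: "Q \<noteq> []" "P \<noteq> []" using lQ lP by auto
    have "(Q @ tl P) ! (length (Q @ tl P) - 2) = P ! (length (Q @ tl P) - 2 + 1 - length Q)"
      by (rule app_idx2[OF Qne lh]) (use lP lQ in auto)
    also have "length (Q @ tl P) - 2 + 1 - length Q = length P - 2" using lP lQ by simp
    finally have "(Q @ tl P) ! (length (Q @ tl P) - 2) \<noteq> R ! 1"
      using Pn \<open>R ! 1 \<in> S2\<close> by auto
    then have QPR: "reduced_path adj (Q @ tl P @ tl R) a' b'"
      using rp_append[OF QP R _ lR] lQP lP by simp
    have aV: "a' \<in> V" "b' \<in> V" using ab sub by auto
    have "Q @ tl P @ tl R = P'" using rp_unique[OF tree QPR P' aV] .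
    moreover have "length (Q @ tl P @ tl R) > length P" using lQP by simp
    ultimately show False using lenP by simp
  qed
qed

lemma ga_one: "group_action G V \<phi> \<Longrightarrow> y \<in> V \<Longrightarrow> \<phi> \<one>\<^bsub>G\<^esub> y = y"
  using group_action.id_eq_one by (metis restrict_apply')

lemma ga_group: "group_action G V \<phi> \<Longrightarrow> group G"
  unfolding group_action_def group_hom_def group_hom_axioms_def by blast

lemma ga_inv: assumes "group_action G V \<phi>" "a \<in> carrier G" "y \<in> V"
  shows "\<phi> a (\<phi> (inv\<^bsub>G\<^esub> a) y) = y"
proof -
  interpret group G using ga_group[OF assms(1)] .
  have "\<phi> (a \<otimes>\<^bsub>G\<^esub> inv\<^bsub>G\<^esub> a) y = \<phi> a (\<phi> (inv\<^bsub>G\<^esub> a) y)"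
    by (rule group_action.composition_rule[OF assms(1) assms(3) assms(2)]) (simp add: assms(2))
  moreover have "a \<otimes>\<^bsub>G\<^esub> inv\<^bsub>G\<^esub> a = \<one>\<^bsub>G\<^esub>" using assms(2) by simp
  ultimately show ?thesis using ga_one[OF assms(1,3)] by simp
qed

lemma ga_comp: assumes "group_action G V \<phi>" "x \<in> V" "g \<in> carrier G" "h \<in> carrier G"
  shows "\<phi> (g \<otimes>\<^bsub>G\<^esub> h) x = \<phi> g (\<phi> h x)"
  using group_action.composition_rule[OF assms] .

lemma ga_in: assumes "group_action G V \<phi>" "x \<in> V" "g \<in> carrier G"
  shows "\<phi> g x \<in> V"
  using group_action.element_image[OF assms(1) assms(3) assms(2)] by simp

lemma eorbit_shift:
  fixes G (structure)
  assumes ga: "group_action G V \<phi>" and H: "subgroup H G" and a: "a \<in> H" and xy: "x \<in> V" "y \<in> V"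
  shows "eorbit H \<phi> (\<phi> a x, \<phi> a y) = eorbit H \<phi> (x, y)"
proof -
  interpret group G using ga_group[OF ga] .
  have aG: "a \<in> carrier G" using subgroup.mem_carrier[OF H a] .
  show ?thesis
  proof
    show "eorbit H \<phi> (\<phi> a x, \<phi> a y) \<subseteq> eorbit H \<phi> (x, y)"
    proof
      fix e assume "e \<in> eorbit H \<phi> (\<phi> a x, \<phi> a y)"
      then obtain c where c: "c \<in> H" "e = (\<phi> c (\<phi> a x), \<phi> c (\<phi> a y))"
        unfolding eorbit_def by auto
      have cG: "c \<in> carrier G" using subgroup.mem_carrier[OF H c(1)] .
      have "e = (\<phi> (c \<otimes> a) x, \<phi> (c \<otimes> a) y)"
        unfolding c(2) ga_comp[OF ga xy(1) cG aG] ga_comp[OF ga xy(2) cG aG] ..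
      moreover have "c \<otimes> a \<in> H" using subgroup.m_closed[OF H c(1) a] .
      ultimately show "e \<in> eorbit H \<phi> (x, y)" unfolding eorbit_def by auto
    qed
  next
    show "eorbit H \<phi> (x, y) \<subseteq> eorbit H \<phi> (\<phi> a x, \<phi> a y)"
    proof
      fix e assume "e \<in> eorbit H \<phi> (x, y)"
      then obtain c where c: "c \<in> H" "e = (\<phi> c x, \<phi> c y)"
        unfolding eorbit_def by auto
      have cG: "c \<in> carrier G" using subgroup.mem_carrier[OF H c(1)] .
      have ciH: "c \<otimes> inv a \<in> H" using subgroup.m_closed[OF H c(1) subgroup.m_inv_closed[OF H a]] .
      have ciG: "c \<otimes> inv a \<in> carrier G" using aG cG by (intro m_closed inv_closed)
      have eq: "(c \<otimes> inv a) \<otimes> a = c" using aG cG by (simp add: m_assoc)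
      have "\<phi> c z = \<phi> (c \<otimes> inv a) (\<phi> a z)" if "z \<in> V" for z
        using ga_comp[OF ga that ciG aG] unfolding eq .
      then have "e = (\<phi> (c \<otimes> inv a) (\<phi> a x), \<phi> (c \<otimes> inv a) (\<phi> a y))"
        unfolding c(2) using xy by (simp only:)
      then show "e \<in> eorbit H \<phi> (\<phi> a x, \<phi> a y)" using ciH unfolding eorbit_def by auto
    qed
  qed
qed

lemma qstar_rep:
  fixes G (structure)
  assumes ga: "group_action G V \<phi>" and H: "subgroup H G"
    and pres: "\<forall>g\<in>carrier G. \<forall>x\<in>V. \<forall>y\<in>V. adj (\<phi> g x) (\<phi> g y) \<longleftrightarrow> adj x y"
    and S: "S \<subseteq> V" "invariant_set H \<phi> S" and v: "v \<in> V"
    and o: "oo \<in> qstar adj H \<phi> S v"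
  shows "\<exists>y. y \<in> S \<and> adj v y \<and> oo = eorbit H \<phi> (v, y)"
proof -
  interpret group G using ga_group[OF ga] .
  obtain x y a where xy: "x \<in> S" "y \<in> S" "adj x y" "a \<in> H" "x = \<phi> a v" "oo = eorbit H \<phi> (x, y)"
    using o unfolding qstar_def vorbit_def by auto
  have aG: "a \<in> carrier G" using subgroup.mem_carrier[OF H xy(4)] .
  have iaH: "inv a \<in> H" using subgroup.m_inv_closed[OF H xy(4)] .
  define y' where "y' = \<phi> (inv a) y"
  have yV: "y \<in> V" using xy S by auto
  have y'S: "y' \<in> S" using S(2) iaH xy(2) unfolding invariant_set_def y'_def by blast
  then have y'V: "y' \<in> V" using S by auto
  have yy: "\<phi> a y' = y" unfolding y'_def using ga_inv[OF ga aG yV] .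
  have "adj v y'" using pres aG v y'V xy(3,5) yy by metis
  moreover have "oo = eorbit H \<phi> (v, y')" using eorbit_shift[OF ga H xy(4) v y'V] xy yy by simp
  ultimately show ?thesis using y'S by blast
qed

lemma qstar_mem:
  assumes ga: "group_action G V \<phi>" and H: "subgroup H G"
    and "v \<in> S" "y \<in> S" "adj v y" "S \<subseteq> V"
  shows "eorbit H \<phi> (v, y) \<in> qstar adj H \<phi> S v"
proof -
  have "\<one>\<^bsub>G\<^esub> \<in> H" using subgroup.one_closed[OF H] .
  then have "v \<in> vorbit H \<phi> v" unfolding vorbit_def using ga_one[OF ga] assms by force
  then show ?thesis unfolding qstar_def using assms by blast
qed

lemma eorbit_self:
  assumes ga: "group_action G V \<phi>" and H: "subgroup H G" and "x \<in> V" "y \<in> V"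
  shows "(x, y) \<in> eorbit H \<phi> (x, y)"
proof -
  have "\<one>\<^bsub>G\<^esub> \<in> H" using subgroup.one_closed[OF H] .
  then show ?thesis unfolding eorbit_def using ga_one[OF ga] assms by force
qed

lemma qmap_eorbit:
  assumes ga: "group_action G V \<phi>" and A: "subgroup A G" and B: "subgroup B G" and AB: "A \<subseteq> B"
    and xy: "x \<in> V" "y \<in> V"
  shows "qmap_edge B \<phi> (eorbit A \<phi> (x, y)) = eorbit B \<phi> (x, y)"
proof -
  have "eorbit B \<phi> e = eorbit B \<phi> (x, y)" if e: "e \<in> eorbit A \<phi> (x, y)" for e
  proof -
    obtain a where a: "a \<in> A" "e = (\<phi> a x, \<phi> a y)" using e unfolding eorbit_def by auto
    then show ?thesis using eorbit_shift[OF ga B _ xy, of a] AB by auto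
  qed
  moreover have "eorbit A \<phi> (x, y) \<noteq> {}" using eorbit_self[OF ga A xy] by blast
  ultimately show ?thesis unfolding qmap_edge_def by auto
qed

lemma eorbit_eq:
  assumes ga: "group_action G V \<phi>" and B: "subgroup B G" and xy: "v \<in> V" "y2 \<in> V"
    and eq: "eorbit B \<phi> (v, y1) = eorbit B \<phi> (v, y2)"
  shows "\<exists>b\<in>B. \<phi> b v = v \<and> \<phi> b y1 = y2"
proof -
  have "(v, y2) \<in> eorbit B \<phi> (v, y1)" using eorbit_self[OF ga B xy] eq by simp
  then obtain b where "b \<in> B" "(v, y2) = (\<phi> b v, \<phi> b y1)" unfolding eorbit_def by auto
  then show ?thesis by (intro bexI[of _ b]) auto
qed

theorem lemma3p2:
  fixes G :: "('g, 'm) monoid_scheme" (structure)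
    and V :: "'v set" and adj :: "'v \<Rightarrow> 'v \<Rightarrow> bool" and \<phi> :: "'g \<Rightarrow> 'v \<Rightarrow> 'v"
    and A B :: "'g set" and TA TB :: "'v set" and v :: 'v
  assumes "group G"
    and "tree_action G V adj \<phi>"
    and "without_inversions G adj \<phi>"
    and "subgroup A G" and "subgroup B G" and "A \<subseteq> B"
    and "\<exists>a\<in>A. hyperbolic G V \<phi> a"
    and "\<exists>b\<in>B. hyperbolic G V \<phi> b"
    and "min_invariant_subtree V adj A \<phi> TA"
    and "min_invariant_subtree V adj B \<phi> TB"
    and "v \<in> TA"
  shows "(finite (qstar adj A \<phi> TA v) \<and> finite (qstar adj B \<phi> TB v) \<longrightarrow>
           ecard (qstar adj A \<phi> TA v)
             \<le> ecard (stabilizer G \<phi> v \<inter> B) * ecard (qstar adj B \<phi> TB v))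
       \<and> (finite (qstar adj A \<phi> TA v) \<and> finite (qstar adj B \<phi> TB v)
           \<and> degenerate adj B \<phi> TB v
           \<and> (\<forall>y\<in>TB. adj v y \<longrightarrow> vstab B \<phi> v \<subseteq> estab B \<phi> (v, y)) \<longrightarrow>
           inj_on (qmap_edge B \<phi>) (qstar adj A \<phi> TA v))"
proof -
  note Asg = assms(4) and Bsg = assms(5) and AB = assms(6)
  have ga: "group_action G V \<phi>" and tree: "is_tree V adj"
    and pres: "\<forall>g\<in>carrier G. \<forall>x\<in>V. \<forall>y\<in>V. adj (\<phi> g x) (\<phi> g y) \<longleftrightarrow> adj x y"
    using assms(2) unfolding tree_action_def by auto
  have TAs: "is_subtree V adj TA" and TAinv: "invariant_set A \<phi> TA"
    and TAmin: "\<And>S'. is_subtree V adj S' \<Longrightarrow> invariant_set A \<phi> S' \<Longrightarrow> S' \<subseteq> TA \<Longrightarrow> S' = TA"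
    using assms(9) unfolding min_invariant_subtree_def by auto
  have TBs: "is_subtree V adj TB" and TBinv: "invariant_set B \<phi> TB"
    using assms(10) unfolding min_invariant_subtree_def by auto
  have TAV: "TA \<subseteq> V" and TBV: "TB \<subseteq> V" and TAne: "TA \<noteq> {}" and TBne: "TB \<noteq> {}"
    using TAs TBs unfolding is_subtree_def by auto
  have TBinvA: "invariant_set A \<phi> TB" using TBinv AB unfolding invariant_set_def by blast
  have meet: "TA \<inter> TB \<noteq> {}"
  proof
    assume disj: "TA \<inter> TB = {}"
    obtain h where h: "h \<in> A" "hyperbolic G V \<phi> h" using assms(7) by blast
    have hG: "h \<in> carrier G" using subgroup.mem_carrier[OF Asg h(1)] .
    obtain a b P where ab: "a \<in> TA" "b \<in> TB" and P: "reduced_path adj P a b"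
      and min: "\<forall>x\<in>TA. \<forall>y\<in>TB. \<forall>Q. reduced_path adj Q x y \<longrightarrow> length P \<le> length Q"
      using minpair_exists[OF tree TAne TBne TAV TBV] by blast
    have aV: "a \<in> V" using ab TAV by auto
    have PV: "set P \<subseteq> V" using rp_set[OF tree P aV] .
    have pres': "\<forall>x\<in>V. \<forall>y\<in>V. adj (\<phi> h x) (\<phi> h y) \<longleftrightarrow> adj x y" using pres hG by blast
    have hP: "reduced_path adj (map (\<phi> h) P) (\<phi> h a) (\<phi> h b)"
      using rp_map[OF group_action.inj_prop[OF ga hG] pres' PV P] .
    have ha: "\<phi> h a \<in> TA" using TAinv h(1) ab(1) unfolding invariant_set_def by blast
    have hb: "\<phi> h b \<in> TB" using TBinvA h(1) ab(2) unfolding invariant_set_def by blast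
    have "\<phi> h a = a"
      using minpair_unique[OF tree TAs TBs disj ab(1) ha ab(2) hb P hP _ min] by simp
    then show False using h(2) aV unfolding hyperbolic_def by blast
  qed
  have "TA \<inter> TB = TA"
  proof (rule TAmin)
    show "is_subtree V adj (TA \<inter> TB)"
      using meet TAs TBs unfolding is_subtree_def by blast
    show "invariant_set A \<phi> (TA \<inter> TB)"
      using TAinv TBinvA unfolding invariant_set_def by blast
  qed auto
  then have TATB: "TA \<subseteq> TB" by blast
  have vV: "v \<in> V" and vTB: "v \<in> TB" using assms(11) TAV TATB by auto
  have BG: "B \<subseteq> carrier G" using subgroup.subset[OF Bsg] .
  have repA: "\<exists>y. y \<in> TA \<and> adj v y \<and> oo = eorbit A \<phi> (v, y)" if "oo \<in> qstar adj A \<phi> TA v" for oo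
    using qstar_rep[OF ga Asg pres TAV TAinv vV that] .
  have repB: "\<exists>y. y \<in> TB \<and> adj v y \<and> oo = eorbit B \<phi> (v, y)" if "oo \<in> qstar adj B \<phi> TB v" for oo
    using qstar_rep[OF ga Bsg pres TBV TBinv vV that] .
  define SA where "SA = qstar adj A \<phi> TA v"
  define SB where "SB = qstar adj B \<phi> TB v"
  define Bv where "Bv = stabilizer G \<phi> v \<inter> B"
  define r where "r s = (SOME y. y \<in> TB \<and> adj v y \<and> s = eorbit B \<phi> (v, y))" for s
  define F where "F p = eorbit A \<phi> (v, \<phi> (fst p) (r (snd p)))" for p
  have rprop: "r s \<in> TB \<and> adj v (r s) \<and> s = eorbit B \<phi> (v, r s)" if "s \<in> SB" for s
    unfolding r_def using someI_ex[OF repB[OF that[unfolded SB_def]]] .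
  have cover: "SA \<subseteq> F ` (Bv \<times> SB)"
  proof
    fix oo assume "oo \<in> SA"
    then obtain y where y: "y \<in> TA" "adj v y" "oo = eorbit A \<phi> (v, y)" using repA SA_def by blast
    have yTB: "y \<in> TB" and yV: "y \<in> V" using y TATB TAV by auto
    define s where "s = eorbit B \<phi> (v, y)"
    have sSB: "s \<in> SB" unfolding s_def SB_def by (rule qstar_mem[OF ga Bsg]) (use vTB yTB y(2) TBV in auto)
    have r: "r s \<in> TB" "adj v (r s)" "s = eorbit B \<phi> (v, r s)" using rprop[OF sSB] by auto
    obtain b where b: "b \<in> B" "\<phi> b v = v" "\<phi> b (r s) = y"
      using eorbit_eq[OF ga Bsg vV yV, of "r s"] r(3) s_def by auto
    have "b \<in> Bv" unfolding Bv_def stabilizer_def using b BG by auto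
    moreover have "F (b, s) = oo" unfolding F_def using b(3) y(3) by simp
    ultimately show "oo \<in> F ` (Bv \<times> SB)" using sSB by force
  qed
  have part1: "ecard SA \<le> ecard Bv * ecard SB" if fin: "finite SA" "finite SB"
  proof (cases "SA = {}")
    case True
    then show ?thesis unfolding ecard_def by (simp add: zero_enat_def[symmetric])
  next
    case False
    then have SBne: "SB \<noteq> {}" using cover by auto
    then have cSB: "card SB > 0" using fin(2) by (simp add: card_gt_0_iff)
    show ?thesis
    proof (cases "finite Bv")
      case True
      have "card SA \<le> card (F ` (Bv \<times> SB))"
        using cover True fin by (intro card_mono) auto
      also have "\<dots> \<le> card (Bv \<times> SB)" by (rule card_image_le) (use True fin in auto)
      also have "\<dots> = card Bv * card SB" by (rule card_cartesian_product)
      finally show ?thesis unfolding ecard_def using True fin by simp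
    next
      case False
      have "ecard Bv * ecard SB = \<infinity>" unfolding ecard_def using False fin cSB SBne
        by (simp add: imult_infinity)
      then show ?thesis by simp
    qed
  qed
  have part2: "inj_on (qmap_edge B \<phi>) SA"
    if H2: "\<forall>y\<in>TB. adj v y \<longrightarrow> vstab B \<phi> v \<subseteq> estab B \<phi> (v, y)"
  proof
    fix o1 o2 assume o1: "o1 \<in> SA" and o2: "o2 \<in> SA" and eq: "qmap_edge B \<phi> o1 = qmap_edge B \<phi> o2"
    obtain y1 where y1: "y1 \<in> TA" "adj v y1" "o1 = eorbit A \<phi> (v, y1)" using repA o1 SA_def by blast
    obtain y2 where y2: "y2 \<in> TA" "adj v y2" "o2 = eorbit A \<phi> (v, y2)" using repA o2 SA_def by blast
    have yV: "y1 \<in> V" "y2 \<in> V" using y1 y2 TAV by auto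
    have "eorbit B \<phi> (v, y1) = eorbit B \<phi> (v, y2)"
      using eq y1(3) y2(3) qmap_eorbit[OF ga Asg Bsg AB vV yV(1)] qmap_eorbit[OF ga Asg Bsg AB vV yV(2)]
      by simp
    then obtain b where b: "b \<in> B" "\<phi> b v = v" "\<phi> b y1 = y2"
      using eorbit_eq[OF ga Bsg vV yV(2)] by blast
    have "b \<in> vstab B \<phi> v" unfolding vstab_def using b by simp
    then have "b \<in> estab B \<phi> (v, y1)" using H2 y1 TATB by blast
    then have "\<phi> b y1 = y1" unfolding estab_def by simp
    then show "o1 = o2" using b(3) y1(3) y2(3) by simp
  qed
  show ?thesis using part1 part2 unfolding SA_def SB_def Bv_def by blast
qed

end
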